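(* Let $A\subset\mathbb{R}^n$ be a set-germ at $0$ with $0\in\overline{A}$, and let $h:(\mathbb{R}^n,0)\to(\mathbb{R}^n,0)$ be a bi-Lipschitz homeomorphism (germ). Then $D(h(A))\subset D(h(LD(A)))$. Moreover, if $A$ satisfies condition $(SSP)$, then $D(h(A))=D(h(LD(A)))$.
   Context: A bi-Lipschitz homeomorphism germ is a homeomorphism between neighbourhoods of $0$ fixing $0$ with $K_1|x-y|\le|h(x)-h(y)|\le K_2|x-y|$ for some $0<K_1\le K_2$ near $0$. Direction set: $D(X)=\{a\in S^{n-1} : \exists\, \{x_i\}\subset X\setminus\{0\},\ x_i\to 0,\ x_i/\|x_i\|\to a\}$; $LD(A)=\{ta : a\in D(A),\ t\ge0\}$. A set-germ $X$ with $0\in\overline{X}$ satisfies condition $(SSP)$ if for every sequence $\{a_m\}\subset\mathbb{R}^n$ with $a_m\to0$ and $\lim a_m/\|a_m\|\in D(X)$ there is a sequence $\{b_m\}\subset X$ with $\|a_m-b_m\|/\|a_m\|\to0$ and $\|a_m-b_m\|/\|b_m\|\to0$. *)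

theory Defs
  imports "HOL-Analysis.Analysis"
begin

definition dirset :: "'a::euclidean_space set \<Rightarrow> 'a set" where
  "dirset X = {a. norm a = 1 \<and> (\<exists>x::nat \<Rightarrow> 'a. (\<forall>i. x i \<in> X - {0}) \<and>
      x \<longlonglongrightarrow> 0 \<and> (\<lambda>i. x i /\<^sub>R norm (x i)) \<longlonglongrightarrow> a)}"

definition LD :: "'a::euclidean_space set \<Rightarrow> 'a set" where
  "LD A = {t *\<^sub>R a | t a. a \<in> dirset A \<and> t \<ge> 0}"

text \<open>h restricted to the open neighbourhood U of 0 is a bi-Lipschitz homeomorphism
  onto an open neighbourhood of 0, fixing 0 (a representative of a bi-Lipschitz
  homeomorphism germ).\<close>
definition bilip_homeo_germ :: "'a::euclidean_space set \<Rightarrow> ('a \<Rightarrow> 'a) \<Rightarrow> bool" where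
  "bilip_homeo_germ U h \<longleftrightarrow> open U \<and> 0 \<in> U \<and> h 0 = 0 \<and> open (h ` U) \<and>
     (\<exists>g. homeomorphism U (h ` U) h g) \<and>
     (\<exists>K1 K2. 0 < K1 \<and> K1 \<le> K2 \<and>
        (\<forall>x\<in>U. \<forall>y\<in>U. K1 * norm (x - y) \<le> norm (h x - h y) \<and>
                          norm (h x - h y) \<le> K2 * norm (x - y)))"

definition SSP :: "'a::euclidean_space set \<Rightarrow> bool" where
  "SSP X \<longleftrightarrow> (\<forall>a::nat \<Rightarrow> 'a. a \<longlonglongrightarrow> 0 \<and>
       (\<exists>l\<in>dirset X. (\<lambda>m. a m /\<^sub>R norm (a m)) \<longlonglongrightarrow> l) \<longrightarrow>
       (\<exists>b::nat \<Rightarrow> 'a. (\<forall>m. b m \<in> X) \<and>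
          (\<lambda>m. norm (a m - b m) / norm (a m)) \<longlonglongrightarrow> 0 \<and>
          (\<lambda>m. norm (a m - b m) / norm (b m)) \<longlonglongrightarrow> 0))"

end

theory Submission
  imports Defs
begin

lemma dirset_iff:
  "a \<in> dirset X \<longleftrightarrow> norm a = 1 \<and>
     (\<forall>e>0. \<exists>x\<in>X-{0}. norm x < e \<and> norm (x /\<^sub>R norm x - a) < e)"
proof
  assume "a \<in> dirset X"
  then obtain x where n: "norm a = 1" and x: "\<forall>i. x i \<in> X - {0}" "x \<longlonglongrightarrow> 0"
     "(\<lambda>i. x i /\<^sub>R norm (x i)) \<longlonglongrightarrow> a" unfolding dirset_def by blast
  show "norm a = 1 \<and> (\<forall>e>0. \<exists>x\<in>X-{0}. norm x < e \<and> norm (x /\<^sub>R norm x - a) < e)"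
  proof (intro conjI allI impI)
    fix e :: real assume e: "e > 0"
    obtain n1 where n1: "\<forall>n\<ge>n1. norm (x n - 0) < e" using LIMSEQ_D[OF x(2) e] by blast
    obtain n2 where n2: "\<forall>n\<ge>n2. norm (x n /\<^sub>R norm (x n) - a) < e" using LIMSEQ_D[OF x(3) e] by blast
    show "\<exists>x\<in>X-{0}. norm x < e \<and> norm (x /\<^sub>R norm x - a) < e"
      using n1[rule_format, of "max n1 n2"] n2[rule_format, of "max n1 n2"] x(1) by force
  qed (use n in auto)
next
  assume H: "norm a = 1 \<and> (\<forall>e>0. \<exists>x\<in>X-{0}. norm x < e \<and> norm (x /\<^sub>R norm x - a) < e)"
  then have "\<forall>n. \<exists>x\<in>X-{0}. norm x < 1 / real (Suc n) \<and> norm (x /\<^sub>R norm x - a) < 1 / real (Suc n)"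
    by simp
  then obtain x where x: "\<And>n. x n \<in> X-{0}" "\<And>n. norm (x n) < 1 / real (Suc n)"
    "\<And>n. norm (x n /\<^sub>R norm (x n) - a) < 1 / real (Suc n)" by metis
  have "x \<longlonglongrightarrow> 0" using LIMSEQ_norm_0 x(2) by blast
  moreover have "(\<lambda>n. x n /\<^sub>R norm (x n) - a) \<longlonglongrightarrow> 0" by (rule LIMSEQ_norm_0) (rule x(3))
  then have "(\<lambda>n. x n /\<^sub>R norm (x n)) \<longlonglongrightarrow> a" using Lim_null by blast
  ultimately show "a \<in> dirset X" unfolding dirset_def using H x(1) by blast
qed

lemma dir_ineq:
  fixes u v :: "'a::real_normed_vector"
  assumes "v \<noteq> 0"
  shows "norm (u /\<^sub>R norm u - v /\<^sub>R norm v) \<le> 2 * norm (u - v) / norm v"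
proof (cases "u = 0")
  case True then show ?thesis using assms by simp
next
  case False
  have "u /\<^sub>R norm u - v /\<^sub>R norm v = (u - v) /\<^sub>R norm v + (1/norm u - 1/norm v) *\<^sub>R u"
    by (simp add: scaleR_diff_left scaleR_diff_right inverse_eq_divide)
  then have "norm (u /\<^sub>R norm u - v /\<^sub>R norm v) \<le> norm (u - v) / norm v + \<bar>1/norm u - 1/norm v\<bar> * norm u"
  proof -
    have "norm ((u - v) /\<^sub>R norm v + (1/norm u - 1/norm v) *\<^sub>R u) \<le> norm ((u - v) /\<^sub>R norm v) + norm ((1/norm u - 1/norm v) *\<^sub>R u)"
      by (rule norm_triangle_ineq)
    also have "norm ((u - v) /\<^sub>R norm v) = norm (u - v) / norm v" by (simp add: divide_inverse_commute)
    also have "norm ((1/norm u - 1/norm v) *\<^sub>R u) = \<bar>1/norm u - 1/norm v\<bar> * norm u" by simp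
    finally show ?thesis using \<open>u /\<^sub>R norm u - v /\<^sub>R norm v = _\<close> by simp
  qed
  also have "\<bar>1/norm u - 1/norm v\<bar> * norm u = \<bar>norm v - norm u\<bar> / norm v"
    using False assms by (simp add: field_simps abs_div)
  also have "\<bar>norm v - norm u\<bar> \<le> norm (u - v)"
    by (metis norm_triangle_ineq3 norm_minus_commute)
  finally show ?thesis using assms by (simp add: divide_right_mono add_divide_distrib[symmetric])
qed

lemma dirset_closed:
  assumes d: "\<And>n. d n \<in> dirset X" and l: "d \<longlonglongrightarrow> l"
  shows "l \<in> dirset X"
  unfolding dirset_iff
proof (intro conjI allI impI)
  have nd: "norm (d n) = 1" for n using d[of n] unfolding dirset_iff by (rule conjunct1)
  have "(\<lambda>n. norm (d n)) \<longlonglongrightarrow> norm l" using l by (rule tendsto_norm)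
  then have "(\<lambda>n. 1::real) \<longlonglongrightarrow> norm l" unfolding nd .
  then show "norm l = 1" using LIMSEQ_unique[OF tendsto_const] by metis
next
  fix e :: real assume e: "e > 0"
  have e2: "e/2 > 0" using e by simp
  obtain n where n: "norm (d n - l) < e/2" using LIMSEQ_D[OF l e2] by blast
  have "\<forall>e>0. \<exists>x\<in>X-{0}. norm x < e \<and> norm (x /\<^sub>R norm x - d n) < e"
    using d[of n] unfolding dirset_iff by (rule conjunct2)
  then obtain x where x: "x \<in> X-{0}" "norm x < e/2" "norm (x /\<^sub>R norm x - d n) < e/2"
    using e2 by blast
  have "norm (x /\<^sub>R norm x - l) \<le> norm (x /\<^sub>R norm x - d n) + norm (d n - l)"
    by (rule norm_diff_triangle_le[OF order_refl order_refl])
  then have "norm x < e \<and> norm (x /\<^sub>R norm x - l) < e" using x(2,3) n e by linarith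
  then show "\<exists>x\<in>X-{0}. norm x < e \<and> norm (x /\<^sub>R norm x - l) < e"
    using x(1) by blast
qed

lemma dir_approx:
  fixes A :: "'a::euclidean_space set"
  assumes "\<delta> > 0"
  shows "\<exists>r>0. \<forall>x\<in>A-{0}. norm x < r \<longrightarrow> (\<exists>d\<in>dirset A. norm (x /\<^sub>R norm x - d) < \<delta>)"
proof (rule ccontr)
  assume H0: "\<not> ?thesis"
  have H: "\<exists>x\<in>A-{0}. norm x < r \<and> (\<forall>d\<in>dirset A. \<not> norm (x /\<^sub>R norm x - d) < \<delta>)" if "r > 0" for r
    using H0 that by blast
  have "\<forall>n. \<exists>x. x \<in> A-{0} \<and> norm x < 1 / real (Suc n) \<and> (\<forall>d\<in>dirset A. \<not> norm (x /\<^sub>R norm x - d) < \<delta>)"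
  proof
    fix n
    have "(0::real) < 1 / real (Suc n)" by simp
    from H[OF this] show "\<exists>x. x \<in> A-{0} \<and> norm x < 1 / real (Suc n) \<and> (\<forall>d\<in>dirset A. \<not> norm (x /\<^sub>R norm x - d) < \<delta>)"
      by blast
  qed
  from choice[OF this] obtain x where xx: "\<forall>n. x n \<in> A-{0} \<and> norm (x n) < 1 / real (Suc n) \<and> (\<forall>d\<in>dirset A. \<not> norm (x n /\<^sub>R norm (x n) - d) < \<delta>)"
    by blast
  have x: "\<And>n. x n \<in> A-{0}" "\<And>n. norm (x n) < 1 / real (Suc n)"
     "\<And>n d. d \<in> dirset A \<Longrightarrow> \<not> norm (x n /\<^sub>R norm (x n) - d) < \<delta>" using xx by blast+
  have "\<forall>n. (\<lambda>n. x n /\<^sub>R norm (x n)) n \<in> sphere 0 1" using x(1) by auto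
  then obtain l r where lr: "l \<in> sphere 0 1" "strict_mono (r :: nat \<Rightarrow> nat)"
     "((\<lambda>n. x n /\<^sub>R norm (x n)) \<circ> r) \<longlonglongrightarrow> l"
    by (rule seq_compactE[OF compact_imp_seq_compact[OF compact_sphere]])
  have x0: "x \<longlonglongrightarrow> 0" using LIMSEQ_norm_0 x(2) by blast
  have "l \<in> dirset A" unfolding dirset_def
  proof (intro CollectI conjI exI[of _ "x \<circ> r"])
    show "norm l = 1" using lr(1) by simp
    show "\<forall>i. (x \<circ> r) i \<in> A - {0}" using x(1) by simp
    show "(x \<circ> r) \<longlonglongrightarrow> 0" using LIMSEQ_subseq_LIMSEQ[OF x0 lr(2)] .
    show "(\<lambda>i. (x \<circ> r) i /\<^sub>R norm ((x \<circ> r) i)) \<longlonglongrightarrow> l" using lr(3) by (simp add: comp_def)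
  qed
  obtain n where "norm (((\<lambda>n. x n /\<^sub>R norm (x n)) \<circ> r) n - l) < \<delta>"
    using LIMSEQ_D[OF lr(3) assms] by blast
  then show False using x(3)[OF \<open>l \<in> dirset A\<close>, of "r n"] by simp
qed

lemma transfer:
  fixes h :: "'a::real_normed_vector \<Rightarrow> 'a"
  assumes K: "0 < K1"
    and lip: "\<forall>x\<in>U. \<forall>y\<in>U. K1 * norm (x - y) \<le> norm (h x - h y) \<and> norm (h x - h y) \<le> K2 * norm (x - y)"
    and h0: "h 0 = 0" "0 \<in> U" and xw: "x \<in> U" "w \<in> U" "x \<noteq> 0"
    and d: "norm (w - x) \<le> \<eta> * norm x"
  shows "K1 * norm x \<le> norm (h x)" "h x \<noteq> 0"
    "norm (h w - h x) \<le> (K2 * \<eta> / K1) * norm (h x)"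
    "norm (h w /\<^sub>R norm (h w) - h x /\<^sub>R norm (h x)) \<le> 2 * (K2 * \<eta> / K1)"
    "norm (h w) \<le> (1 + K2 * \<eta> / K1) * norm (h x)"
proof -
  have l1: "K1 * norm x \<le> norm (h x)" and l2: "norm (h x) \<le> K2 * norm x"
    using lip xw h0 by (metis diff_zero)+
  show "K1 * norm x \<le> norm (h x)" by (rule l1)
  have nx: "norm x > 0" using xw by simp
  then have hx: "norm (h x) > 0" using l1 mult_pos_pos[OF K nx] by linarith
  then show "h x \<noteq> 0" by auto
  have "0 \<le> \<eta> * norm x" by (rule order_trans[OF norm_ge_zero d])
  then have eta: "\<eta> \<ge> 0" using nx by (simp add: zero_le_mult_iff)
  have "K1 * norm x \<le> K2 * norm x" using l1 l2 by linarith
  then have "K1 \<le> K2" using nx by simp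
  then have K2: "K2 \<ge> 0" using K by linarith
  have "norm (h w - h x) \<le> K2 * norm (w - x)" using lip xw by blast
  also have "\<dots> \<le> K2 * (\<eta> * norm x)" by (rule mult_left_mono[OF d K2])
  also have "\<dots> = (K2 * \<eta> / K1) * (K1 * norm x)" using K by simp
  also have "\<dots> \<le> (K2 * \<eta> / K1) * norm (h x)" using l1 K K2 eta by (intro mult_left_mono) auto
  finally show hw: "norm (h w - h x) \<le> (K2 * \<eta> / K1) * norm (h x)" .
  have "norm (h w /\<^sub>R norm (h w) - h x /\<^sub>R norm (h x)) \<le> 2 * norm (h w - h x) / norm (h x)"
    using dir_ineq hx by auto
  also have "\<dots> \<le> 2 * ((K2 * \<eta> / K1) * norm (h x)) / norm (h x)"
    using hw hx by (intro divide_right_mono) auto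
  also have "\<dots> = 2 * (K2 * \<eta> / K1)" using hx by simp
  finally show "norm (h w /\<^sub>R norm (h w) - h x /\<^sub>R norm (h x)) \<le> 2 * (K2 * \<eta> / K1)" .
  have "norm (h w) \<le> norm (h x) + norm (h w - h x)" by (rule norm_triangle_sub)
  then show "norm (h w) \<le> (1 + K2 * \<eta> / K1) * norm (h x)" using hw by (simp add: distrib_right)
qed

theorem lemma5p6:
  fixes A U :: "'a::euclidean_space set" and h :: "'a \<Rightarrow> 'a"
  assumes "0 \<in> closure A"
    and "bilip_homeo_germ U h"
  shows "dirset (h ` (A \<inter> U)) \<subseteq> dirset (h ` (LD A \<inter> U)) \<and>
         (SSP A \<longrightarrow> dirset (h ` (A \<inter> U)) = dirset (h ` (LD A \<inter> U)))"
proof -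
  obtain K1 K2 where K: "0 < K1" "K1 \<le> K2"
    and lip: "\<forall>x\<in>U. \<forall>y\<in>U. K1 * norm (x - y) \<le> norm (h x - h y) \<and> norm (h x - h y) \<le> K2 * norm (x - y)"
    using assms(2) unfolding bilip_homeo_germ_def by blast
  have oU: "open U" and U0: "0 \<in> U" and h0: "h 0 = 0" using assms(2) unfolding bilip_homeo_germ_def by auto
  obtain \<rho> where \<rho>: "\<rho> > 0" "ball 0 \<rho> \<subseteq> U" using oU U0 open_contains_ball by blast
  have K2: "K2 > 0" using K by simp
  have part1: "dirset (h ` (A \<inter> U)) \<subseteq> dirset (h ` (LD A \<inter> U))"
  proof
    fix a assume a: "a \<in> dirset (h ` (A \<inter> U))"
    show "a \<in> dirset (h ` (LD A \<inter> U))" unfolding dirset_iff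
    proof (intro conjI allI impI)
      show "norm a = 1" using a unfolding dirset_iff by blast
      fix e :: real assume e: "e > 0"
      define \<eta> where "\<eta> = e * K1 / (8 * K2)"
      have \<eta>: "\<eta> > 0" using e K K2 unfolding \<eta>_def by simp
      have c: "K2 * \<eta> / K1 = e / 8" unfolding \<eta>_def using K K2 by simp
      obtain r where r: "r > 0" "\<And>x. x \<in> A-{0} \<Longrightarrow> norm x < r \<Longrightarrow> \<exists>d\<in>dirset A. norm (x /\<^sub>R norm x - d) < \<eta>"
        using dir_approx[OF \<eta>, of A] by blast
      define \<epsilon> where "\<epsilon> = min (e/2) (min (e/(1+e)) (K1 * min r \<rho>))"
      have \<epsilon>: "\<epsilon> > 0" unfolding \<epsilon>_def using e K r \<rho> by simp
      obtain y where y: "y \<in> h ` (A \<inter> U) - {0}" "norm y < \<epsilon>" "norm (y /\<^sub>R norm y - a) < \<epsilon>"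
        using a \<epsilon> unfolding dirset_iff by blast
      then obtain x where x: "x \<in> A" "x \<in> U" "y = h x" by blast
      have x0: "x \<noteq> 0" using y x h0 by auto
      have "K1 * norm x \<le> norm (h x)" using transfer(1)[OF K(1) lip h0 U0 x(2) x(2) x0, of 0] by simp
      also have "\<dots> < K1 * min r \<rho>" using y x unfolding \<epsilon>_def by simp
      finally have xr: "norm x < r" "norm x < \<rho>" using K by simp_all
      obtain d where d: "d \<in> dirset A" "norm (x /\<^sub>R norm x - d) < \<eta>" using r(2)[OF _ xr(1)] x x0 by blast
      have nd: "norm d = 1" using d unfolding dirset_iff by blast
      define z where "z = norm x *\<^sub>R d"
      have zLD: "z \<in> LD A" unfolding LD_def z_def using d(1) norm_ge_zero by blast
      have nz: "norm z = norm x" unfolding z_def using nd by simp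
      have zU: "z \<in> U" using \<rho> nz xr by auto
      have z0: "z \<noteq> 0" using nz x0 by auto
      have "z - x = norm x *\<^sub>R (d - x /\<^sub>R norm x)" unfolding z_def using x0 by (simp add: algebra_simps)
      then have "norm (z - x) = norm x * norm (x /\<^sub>R norm x - d)" by (simp add: norm_minus_commute)
      also have "\<dots> \<le> \<eta> * norm x" using d(2) by (metis less_imp_le mult.commute mult_left_mono norm_ge_zero)
      finally have zx: "norm (z - x) \<le> \<eta> * norm x" .
      note T = transfer[OF K(1) lip h0 U0 x(2) zU x0 zx, unfolded c]
      have hz0: "h z \<noteq> 0" using transfer(2)[OF K(1) lip h0 U0 zU zU z0, of 0] by simp
      show "\<exists>x\<in>h ` (LD A \<inter> U) - {0}. norm x < e \<and> norm (x /\<^sub>R norm x - a) < e"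
      proof (intro bexI conjI)
        show "h z \<in> h ` (LD A \<inter> U) - {0}" using zLD zU hz0 by auto
        have "norm (h z) \<le> (1 + e/8) * norm (h x)" using T(5) .
        also have "\<dots> \<le> (1 + e) * norm (h x)" using e by (intro mult_right_mono) auto
        also have "\<dots> < (1 + e) * (e / (1 + e))" using y x e unfolding \<epsilon>_def by (intro mult_strict_left_mono) auto
        also have "\<dots> = e" using e by simp
        finally show "norm (h z) < e" .
        have "norm (h z /\<^sub>R norm (h z) - a) \<le> norm (h z /\<^sub>R norm (h z) - h x /\<^sub>R norm (h x)) + norm (h x /\<^sub>R norm (h x) - a)"
          by (rule norm_diff_triangle_le[OF order_refl order_refl])
        also have "\<dots> < 2 * (e/8) + e/2" using T(4) y x unfolding \<epsilon>_def by (intro add_le_less_mono) auto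
        finally show "norm (h z /\<^sub>R norm (h z) - a) < e" using e by simp
      qed
    qed
  qed
  have part2: "dirset (h ` (LD A \<inter> U)) \<subseteq> dirset (h ` (A \<inter> U))" if ssp: "SSP A"
  proof
    fix a assume a: "a \<in> dirset (h ` (LD A \<inter> U))"
    then obtain y where y: "\<And>i. y i \<in> h ` (LD A \<inter> U) - {0}" "y \<longlonglongrightarrow> 0"
      "(\<lambda>i. y i /\<^sub>R norm (y i)) \<longlonglongrightarrow> a" and na: "norm a = 1" unfolding dirset_def by blast
    have ex: "\<forall>i. \<exists>t d. d \<in> dirset A \<and> t \<ge> 0 \<and> t *\<^sub>R d \<in> U \<and> y i = h (t *\<^sub>R d)"
    proof
      fix i
      obtain zi where zi: "zi \<in> LD A" "zi \<in> U" "y i = h zi" using y(1)[of i] by blast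
      then obtain tt d where "zi = tt *\<^sub>R d" "d \<in> dirset A" "tt \<ge> 0" unfolding LD_def by blast
      then show "\<exists>t d. d \<in> dirset A \<and> t \<ge> 0 \<and> t *\<^sub>R d \<in> U \<and> y i = h (t *\<^sub>R d)" using zi by blast
    qed
    then obtain t dd where td: "\<And>i. dd i \<in> dirset A" "\<And>i. t i \<ge> 0" "\<And>i. t i *\<^sub>R dd i \<in> U"
      "\<And>i. y i = h (t i *\<^sub>R dd i)"
    proof -
      from choice[OF ex] obtain t where "\<forall>i. \<exists>d. d \<in> dirset A \<and> t i \<ge> 0 \<and> t i *\<^sub>R d \<in> U \<and> y i = h (t i *\<^sub>R d)" by blast
      from choice[OF this] obtain dd where "\<forall>i. dd i \<in> dirset A \<and> t i \<ge> 0 \<and> t i *\<^sub>R dd i \<in> U \<and> y i = h (t i *\<^sub>R dd i)" by blast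
      then show ?thesis using that by blast
    qed
    define z where "z i = t i *\<^sub>R dd i" for i
    have zU: "z i \<in> U" for i using td z_def by simp
    have yz: "y i = h (z i)" for i using td z_def by simp
    have ndd: "norm (dd i) = 1" for i using td(1) unfolding dirset_iff by blast
    have z0: "z i \<noteq> 0" for i using y(1)[of i] yz[of i] h0 by auto
    then have tpos: "t i > 0" for i using td(2)[of i] z_def by (metis less_eq_real_def scale_zero_left)
    have nz: "norm (z i) = t i" for i unfolding z_def using ndd tpos by (simp add: less_imp_le)
    have dirz: "z i /\<^sub>R norm (z i) = dd i" for i unfolding nz unfolding z_def using tpos[of i] by simp
    have Kz: "K1 * norm (z i) \<le> norm (y i)" for i
      using transfer(1)[OF K(1) lip h0 U0 zU[of i] zU[of i] z0[of i], of 0] yz by simp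
    have "z \<longlonglongrightarrow> 0"
    proof (rule Lim_null_comparison)
      show "\<forall>\<^sub>F i in sequentially. norm (z i) \<le> norm (y i) / K1"
        using Kz K by (simp add: mult.commute pos_le_divide_eq)
      show "(\<lambda>i. norm (y i) / K1) \<longlonglongrightarrow> 0"
        using tendsto_divide_zero[OF tendsto_norm_zero[OF y(2)]] .
    qed
    have "\<forall>n. dd n \<in> sphere 0 1" using ndd by simp
    then obtain d r where dr: "d \<in> sphere 0 1" "strict_mono (r :: nat \<Rightarrow> nat)" "(dd \<circ> r) \<longlonglongrightarrow> d"
      by (rule seq_compactE[OF compact_imp_seq_compact[OF compact_sphere]])
    have dA: "d \<in> dirset A" using dirset_closed[OF _ dr(3)] td(1) by simp
    define zz where "zz = z \<circ> r"
    have zz0: "zz \<longlonglongrightarrow> 0" unfolding zz_def using LIMSEQ_subseq_LIMSEQ[OF \<open>z \<longlonglongrightarrow> 0\<close> dr(2)] .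
    have "(\<lambda>m. zz m /\<^sub>R norm (zz m)) = dd \<circ> r" unfolding zz_def using dirz by auto
    then have "(\<lambda>m. zz m /\<^sub>R norm (zz m)) \<longlonglongrightarrow> d" using dr(3) by simp
    then obtain b where b: "\<And>m. b m \<in> A" "(\<lambda>m. norm (zz m - b m) / norm (zz m)) \<longlonglongrightarrow> 0"
      using ssp zz0 dA unfolding SSP_def by blast
    have yr0: "(y \<circ> r) \<longlonglongrightarrow> 0" using LIMSEQ_subseq_LIMSEQ[OF y(2) dr(2)] .
    have yra: "((\<lambda>i. y i /\<^sub>R norm (y i)) \<circ> r) \<longlonglongrightarrow> a" using LIMSEQ_subseq_LIMSEQ[OF y(3) dr(2)] .
    show "a \<in> dirset (h ` (A \<inter> U))" unfolding dirset_iff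
    proof (intro conjI allI impI)
      show "norm a = 1" by (rule na)
      fix e :: real assume e: "e > 0"
      define \<eta> where "\<eta> = min (1/2) (e * K1 / (8 * K2))"
      have \<eta>: "\<eta> > 0" "\<eta> \<le> 1/2" using e K K2 unfolding \<eta>_def by auto
      have c: "K2 * \<eta> / K1 \<le> e / 8"
      proof -
        have "K2 * \<eta> \<le> K2 * (e * K1 / (8 * K2))" unfolding \<eta>_def using K2 by (intro mult_left_mono) auto
        then show ?thesis using K K2 by (simp add: pos_divide_le_eq)
      qed
      have c0: "K2 * \<eta> / K1 \<ge> 0" using K K2 \<eta> by simp
      obtain N1 where N1: "\<forall>m\<ge>N1. norm (norm (zz m - b m) / norm (zz m) - 0) < \<eta>" using LIMSEQ_D[OF b(2) \<eta>(1)] by blast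
      obtain N2 where N2: "\<forall>m\<ge>N2. norm (zz m - 0) < \<rho>/2" using LIMSEQ_D[OF zz0, of "\<rho>/2"] \<rho> by auto
      obtain N3 where N3: "\<forall>m\<ge>N3. norm ((y \<circ> r) m - 0) < e/(1+e)" using LIMSEQ_D[OF yr0, of "e/(1+e)"] e by auto
      obtain N4 where N4: "\<forall>m\<ge>N4. norm (((\<lambda>i. y i /\<^sub>R norm (y i)) \<circ> r) m - a) < e/2" using LIMSEQ_D[OF yra, of "e/2"] e by auto
      define m where "m = max (max N1 N2) (max N3 N4)"
      define x where "x = zz m"
      define w where "w = b m"
      have x0: "x \<noteq> 0" and xU: "x \<in> U" unfolding x_def zz_def using z0 zU by auto
      have hx: "h x = y (r m)" unfolding x_def zz_def using yz by simp
      have nx: "norm x > 0" using x0 by simp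
      have "norm (x - w) / norm x < \<eta>" using N1 unfolding m_def x_def w_def by auto
      then have wx: "norm (w - x) \<le> \<eta> * norm x" using nx by (simp add: norm_minus_commute pos_divide_less_eq)
      have xr: "norm x < \<rho>/2" using N2 unfolding m_def x_def by auto
      have eh: "\<eta> * norm x \<le> (1/2) * norm x" using \<eta>(2) by (rule mult_right_mono) simp
      have "norm w \<le> norm x + norm (w - x)" by (rule norm_triangle_sub)
      also have "\<dots> \<le> norm x + norm x / 2" using wx eh by linarith
      finally have "norm w < \<rho>" using xr \<rho>(1) by linarith
      then have wU: "w \<in> U" using \<rho> by auto
      have w0: "w \<noteq> 0"
      proof
        assume "w = 0"
        then have "norm x \<le> \<eta> * norm x" using wx by simp
        also have "\<dots> \<le> norm x / 2" using eh by linarith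
        finally show False using nx by simp
      qed
      note T = transfer[OF K(1) lip h0 U0 xU wU x0 wx]
      have hw0: "h w \<noteq> 0" using transfer(2)[OF K(1) lip h0 U0 wU wU w0, of 0] by simp
      have hxe: "norm (h x) < e/(1+e)" using N3 hx unfolding m_def by auto
      have hxd: "norm (h x /\<^sub>R norm (h x) - a) < e/2" using N4 hx unfolding m_def by auto
      show "\<exists>x\<in>h ` (A \<inter> U) - {0}. norm x < e \<and> norm (x /\<^sub>R norm x - a) < e"
      proof (intro bexI conjI)
        show "h w \<in> h ` (A \<inter> U) - {0}" using b(1) wU hw0 unfolding w_def by auto
        have "norm (h w) \<le> (1 + K2 * \<eta> / K1) * norm (h x)" using T(5) .
        also have "\<dots> \<le> (1 + e) * norm (h x)" using e c c0 by (intro mult_right_mono) (linarith, simp)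
        also have "\<dots> < (1 + e) * (e / (1 + e))" using hxe e by (intro mult_strict_left_mono) auto
        also have "\<dots> = e" using e by simp
        finally show "norm (h w) < e" .
        have "norm (h w /\<^sub>R norm (h w) - a) \<le> norm (h w /\<^sub>R norm (h w) - h x /\<^sub>R norm (h x)) + norm (h x /\<^sub>R norm (h x) - a)"
          by (rule norm_diff_triangle_le[OF order_refl order_refl])
        also have "\<dots> < 2 * (e/8) + e/2" using T(4) c hxd by (intro add_le_less_mono) linarith+
        finally show "norm (h w /\<^sub>R norm (h w) - a) < e" using e by simp
      qed
    qed
  qed
  show ?thesis using part1 part2 by blast
qed

end
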